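(* Consider $N\ge3$ cells on a ring, with interconnection matrix $M\in\mathbb{R}^{N\times N}$ the circulant matrix with $[M]_{i,i\pm1 \bmod N}=\tfrac12$ and all other entries $0$, so that its eigenvalues are $\lambda_k(M)=\cos\frac{2\pi k}{N}\in[-1,1]$, $k=0,\dots,N-1$. The mutual inactivation Notch–Delta model is $$\dot N_i=\beta_N-\gamma N_i-\frac{N_iv_{D_i}}{k_t}-\frac{N_iD_i}{k_c},\quad \dot D_i=\bar\beta_D+u_i-\gamma D_i-\frac{D_iv_{N_i}}{k_t}-\frac{N_iD_i}{k_c},\quad \dot R_i=\beta_R\frac{(N_iv_{D_i})^n}{k_{RS}+(N_iv_{D_i})^n}-\gamma_RR_i,$$ with $(v_{N_i},v_{D_i})$ the $i$th block of $(M\otimes I_2)w$, $w_i=(N_i,D_i)$, and all parameters $\beta_N,\bar\beta_D,\gamma,\gamma_R,k_t,k_c,\beta_R,k_{RS},n$ positive. Let $(\bar N^*,\bar D^*,\bar R^* )$ with $\bar N^*,\bar D^*>0$ be a spatially homogeneous steady state for $u\equiv0$ (so $\bar v_N^*=\bar N^*$, $\bar v_D^*=\bar D^*$), and define $$A=\begin{pmatrix}-\gamma-\frac{\bar v_D^*}{k_t}-\frac{\bar D^*}{k_c}&-\frac{\bar N^*}{k_c}&0\\-\frac{\bar D^*}{k_c}&-\gamma-\frac{\bar v_N^*}{k_t}-\frac{\bar N^*}{k_c}&0\\ b_1&0&-\gamma_R\end{pmatrix},\quad B_v=\begin{pmatrix}0&-\frac{\bar N^*}{k_t}\\-\frac{\bar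 D^*}{k_t}&0\\0&b_2\end{pmatrix},\quad G=\begin{pmatrix}1&0&0\\0&1&0\end{pmatrix},$$ where $b_1=\beta_Rnk_{RS}\frac{(\bar v_D^* )^n(\bar N^* )^{n-1}}{(k_{RS}+(\bar N^*\bar v_D^* )^n)^2}$ and $b_2=\frac{\bar N^*}{\bar v_D^*}b_1$. Then for every $k=0,\dots,N-1$, all eigenvalues of $A+\lambda_k(M)B_vG$ have negative real part; i.e. the linearization about the homogeneous steady state is asymptotically stable.
   Context: $\otimes$ denotes the Kronecker product. $N_i,D_i,R_i$ are concentrations of Notch, Delta and a reporter in cell $i$; $v_{N_i},v_{D_i}$ are the average Notch and Delta of the two neighbors of cell $i$. *)

theory Defs
  imports "Jordan_Normal_Form.Char_Poly"
begin

definition ring_eig :: "nat \<Rightarrow> nat \<Rightarrow> real" where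
  "ring_eig NN k = cos (2 * pi * real k / real NN)"

definition ring_M :: "nat \<Rightarrow> real mat" where
  "ring_M NN = mat NN NN (\<lambda>(i,j). if j = (i + 1) mod NN \<or> i = (j + 1) mod NN then 1/2 else 0)"

definition hom_steady_state ::
  "real \<Rightarrow> real \<Rightarrow> real \<Rightarrow> real \<Rightarrow> real \<Rightarrow> real \<Rightarrow> real \<Rightarrow> real \<Rightarrow> real \<Rightarrow>
   real \<Rightarrow> real \<Rightarrow> real \<Rightarrow> bool" where
  "hom_steady_state \<beta>N \<beta>D \<gamma> \<gamma>R kt kc \<beta>R kRS n Ns Ds Rs \<longleftrightarrow>
     \<beta>N - \<gamma> * Ns - Ns * Ds / kt - Ns * Ds / kc = 0 \<and>
     \<beta>D - \<gamma> * Ds - Ds * Ns / kt - Ns * Ds / kc = 0 \<and>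
     \<beta>R * (Ns * Ds) powr n / (kRS + (Ns * Ds) powr n) - \<gamma>R * Rs = 0"

definition nd_b1 :: "real \<Rightarrow> real \<Rightarrow> real \<Rightarrow> real \<Rightarrow> real \<Rightarrow> real" where
  "nd_b1 \<beta>R kRS n Ns Ds =
     \<beta>R * n * kRS * (Ds powr n * Ns powr (n - 1)) / (kRS + (Ns * Ds) powr n)\<^sup>2"

definition nd_b2 :: "real \<Rightarrow> real \<Rightarrow> real \<Rightarrow> real \<Rightarrow> real \<Rightarrow> real" where
  "nd_b2 \<beta>R kRS n Ns Ds = Ns / Ds * nd_b1 \<beta>R kRS n Ns Ds"

definition nd_A :: "real \<Rightarrow> real \<Rightarrow> real \<Rightarrow> real \<Rightarrow> real \<Rightarrow> real \<Rightarrow> real \<Rightarrow> real \<Rightarrow> real \<Rightarrow> real mat" where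
  "nd_A \<gamma> \<gamma>R kt kc \<beta>R kRS n Ns Ds = mat_of_rows_list 3
     [[- \<gamma> - Ds / kt - Ds / kc, - Ns / kc, 0],
      [- Ds / kc, - \<gamma> - Ns / kt - Ns / kc, 0],
      [nd_b1 \<beta>R kRS n Ns Ds, 0, - \<gamma>R]]"

definition nd_Bv :: "real \<Rightarrow> real \<Rightarrow> real \<Rightarrow> real \<Rightarrow> real \<Rightarrow> real \<Rightarrow> real mat" where
  "nd_Bv kt \<beta>R kRS n Ns Ds = mat_of_rows_list 2
     [[0, - Ns / kt],
      [- Ds / kt, 0],
      [0, nd_b2 \<beta>R kRS n Ns Ds]]"

definition nd_G :: "real mat" where
  "nd_G = mat_of_rows_list 3 [[1, 0, 0], [0, 1, 0]]"

end

theory Submission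
  imports Defs
begin
lemma matEq:
  "nd_A \<gamma> \<gamma>R kt kc \<beta>R kRS n Ns Ds + c \<cdot>\<^sub>m (nd_Bv kt \<beta>R kRS n Ns Ds * nd_G)
   = mat_of_rows_list 3
     [[- \<gamma> - Ds / kt - Ds / kc, - Ns / kc - c * (Ns / kt), 0],
      [- Ds / kc - c * (Ds / kt), - \<gamma> - Ns / kt - Ns / kc, 0],
      [nd_b1 \<beta>R kRS n Ns Ds, c * nd_b2 \<beta>R kRS n Ns Ds, - \<gamma>R]]"
  apply (rule eq_matI)
  apply (auto simp: nd_A_def nd_Bv_def nd_G_def mat_of_rows_list_def times_mat_def scalar_prod_def eval_nat_numeral less_Suc_eq)
  done

lemma alg2:
  fixes a b c d m x y :: complex
  assumes "a * x + b * y = m * x" "c * x + d * y = m * y"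
  shows "((m - a) * (m - d) - b * c) * x = 0" "((m - a) * (m - d) - b * c) * y = 0"
proof -
  have "((m - a) * (m - d) - b * c) * x = (m - d) * (m * x - (a * x + b * y)) + b * (m * y - (c * x + d * y))"
    by (simp add: algebra_simps)
  then show "((m - a) * (m - d) - b * c) * x = 0" using assms by simp
  have "((m - a) * (m - d) - b * c) * y = (m - a) * (m * y - (c * x + d * y)) + c * (m * x - (a * x + b * y))"
    by (simp add: algebra_simps)
  then show "((m - a) * (m - d) - b * c) * y = 0" using assms by simp
qed

lemma ev3:
  fixes c :: real and v :: "complex vec"
  assumes "eigenvector (map_mat complex_of_real (mat_of_rows_list 3
     [[a11, a12, 0], [a21, a22, 0], [b1, b2, -g]])) v \<mu>"
  shows "\<mu> = - of_real g \<or> (\<mu> - of_real a11) * (\<mu> - of_real a22) - of_real a12 * of_real a21 = (0::complex)"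
proof -
  have v: "v \<in> carrier_vec 3" "v \<noteq> 0\<^sub>v 3" and e: "map_mat complex_of_real (mat_of_rows_list 3
     [[a11, a12, 0], [a21, a22, 0], [b1, b2, -g]]) *\<^sub>v v = \<mu> \<cdot>\<^sub>v v"
    using assms unfolding eigenvector_def by (auto simp: mat_of_rows_list_def eval_nat_numeral)
  have "\<And>i. i < 3 \<Longrightarrow> (map_mat complex_of_real (mat_of_rows_list 3
     [[a11, a12, 0], [a21, a22, 0], [b1, b2, -g]]) *\<^sub>v v) $ i = \<mu> * v $ i"
    using e v by (metis carrier_vecD index_smult_vec(1))
  from this[of 0] this[of 1] this[of 2] v(1)
  have eqs: "of_real a11 * v$0 + of_real a12 * v$1 = \<mu> * v$0" "of_real a21 * v$0 + of_real a22 * v$1 = \<mu> * v$1"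
     "of_real b1 * v$0 + of_real b2 * v$1 - of_real g * v$2 = \<mu> * v$2"
    by (auto simp: mat_of_rows_list_def mult_mat_vec_def scalar_prod_def eval_nat_numeral)
  let ?d = "(\<mu> - of_real a11) * (\<mu> - of_real a22) - of_real a12 * of_real a21"
  note dd = alg2[OF eqs(1,2)]
  have d0: "?d * v$0 = 0" by (rule dd(1))
  have d1: "?d * v$1 = 0" by (rule dd(2))
  show ?thesis
  proof (rule disjCI)
    assume "?d \<noteq> 0"
    with d0 d1 have z: "v$0 = 0" "v$1 = 0" by auto
    have "v$2 \<noteq> 0"
    proof
      assume "v$2 = 0"
      with z v(1) have "v = 0\<^sub>v 3"
        by (intro eq_vecI) (auto simp: eval_nat_numeral less_Suc_eq)
      with v(2) show False by simp
    qed
    moreover from eqs(3) z have "(\<mu> + of_real g) * v$2 = 0" by (simp add: algebra_simps)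
    ultimately show "\<mu> = - of_real g" by (simp add: add_eq_0_iff)
  qed
qed

lemma quad:
  fixes a11 a22 a12 a21 :: real and \<mu> :: complex
  assumes "a11 < 0" "a22 < 0" "a11 * a22 - a12 * a21 > 0"
    and "(\<mu> - of_real a11) * (\<mu> - of_real a22) - of_real a12 * of_real a21 = 0"
  shows "Re \<mu> < 0"
proof -
  let ?x = "Re \<mu>" and ?y = "Im \<mu>"
  have re: "(?x - a11) * (?x - a22) - ?y * ?y - a12 * a21 = 0"
    using arg_cong[OF assms(4), of Re] by (simp add: algebra_simps)
  have im: "?y * (2 * ?x - a11 - a22) = 0"
    using arg_cong[OF assms(4), of Im] by (simp add: algebra_simps)
  show ?thesis
  proof (cases "?y = 0")
    case False
    with im have "2 * ?x = a11 + a22" by simp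
    with assms show ?thesis by simp
  next
    case True
    show ?thesis
    proof (rule ccontr)
      assume "\<not> ?x < 0"
      hence x: "?x \<ge> 0" by simp
      have "(?x - a11) * (?x - a22) = ?x * ?x - ?x * (a11 + a22) + a11 * a22" by (simp add: algebra_simps)
      also have "... \<ge> a11 * a22" using x assms(1,2)
        by (smt (verit) mult_nonneg_nonneg mult_nonneg_nonpos)
      finally show False using re True assms(3) by simp
    qed
  qed
qed

lemma detpos:
  fixes \<gamma> kt kc Ns Ds c :: real
  assumes "\<gamma> > 0" "kt > 0" "kc > 0" "Ns > 0" "Ds > 0" "\<bar>c\<bar> \<le> 1"
  shows "(- \<gamma> - Ds / kt - Ds / kc) * (- \<gamma> - Ns / kt - Ns / kc)
         - (- Ns / kc - c * (Ns / kt)) * (- Ds / kc - c * (Ds / kt)) > 0"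
proof -
  define p where "p = 1/kt + 1/kc"
  define q where "q = 1/kc + c/kt"
  have p0: "p > 0" using assms unfolding p_def by (simp add: add_pos_pos)
  have c1: "c \<le> 1" "-1 \<le> c" using assms(6) by auto
  have a: "-(1/kt) \<le> c/kt" "c/kt \<le> 1/kt"
    using divide_right_mono[OF c1(1), of kt] divide_right_mono[OF c1(2), of kt] assms(2) by auto
  have b: "1/kc > 0" using assms by simp
  have qp: "\<bar>q\<bar> \<le> p" unfolding p_def q_def abs_le_iff using a b by linarith
  have "\<bar>q\<bar> * \<bar>q\<bar> \<le> p * p" by (rule mult_mono[OF qp qp]) (use p0 in auto)
  hence "q * q \<le> p * p" by simp
  hence "Ns * Ds * (q * q) \<le> Ns * Ds * (p * p)" using assms by simp
  moreover have "(\<gamma> + Ds * p) * (\<gamma> + Ns * p) > Ns * Ds * (p * p)"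
  proof -
    have "(\<gamma> + Ds * p) * (\<gamma> + Ns * p) = \<gamma> * \<gamma> + \<gamma> * (Ds * p) + \<gamma> * (Ns * p) + Ns * Ds * (p * p)"
      by (simp add: algebra_simps)
    moreover have "\<gamma> * \<gamma> > 0" "\<gamma> * (Ds * p) > 0" "\<gamma> * (Ns * p) > 0" using assms p0 by auto
    ultimately show ?thesis by linarith
  qed
  moreover have "(- \<gamma> - Ds / kt - Ds / kc) * (- \<gamma> - Ns / kt - Ns / kc)
         - (- Ns / kc - c * (Ns / kt)) * (- Ds / kc - c * (Ds / kt))
       = (\<gamma> + Ds * p) * (\<gamma> + Ns * p) - Ns * Ds * (q * q)"
    unfolding p_def q_def by (simp add: algebra_simps)
  ultimately show ?thesis by linarith
qed

theorem mainTheorem5: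
  fixes NN :: nat and \<beta>N \<beta>D \<gamma> \<gamma>R kt kc \<beta>R kRS n Ns Ds Rs :: real
  assumes "NN \<ge> 3"
    and "\<beta>N > 0" "\<beta>D > 0" "\<gamma> > 0" "\<gamma>R > 0" "kt > 0" "kc > 0"
        "\<beta>R > 0" "kRS > 0" "n > 0"
    and "Ns > 0" "Ds > 0"
    and "hom_steady_state \<beta>N \<beta>D \<gamma> \<gamma>R kt kc \<beta>R kRS n Ns Ds Rs"
  shows "\<forall>k < NN. \<forall>\<mu> :: complex.
           eigenvalue (map_mat complex_of_real
             (nd_A \<gamma> \<gamma>R kt kc \<beta>R kRS n Ns Ds
              + ring_eig NN k \<cdot>\<^sub>m (nd_Bv kt \<beta>R kRS n Ns Ds * nd_G))) \<mu>
           \<longrightarrow> Re \<mu> < 0"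
proof (intro allI impI)
  fix k \<mu>
  assume ev: "eigenvalue (map_mat complex_of_real
             (nd_A \<gamma> \<gamma>R kt kc \<beta>R kRS n Ns Ds
              + ring_eig NN k \<cdot>\<^sub>m (nd_Bv kt \<beta>R kRS n Ns Ds * nd_G))) \<mu>"
  define c where "c = ring_eig NN k"
  have c1: "\<bar>c\<bar> \<le> 1" unfolding c_def ring_eig_def by (rule abs_cos_le_one)
  from ev obtain v where "eigenvector (map_mat complex_of_real (mat_of_rows_list 3
     [[- \<gamma> - Ds / kt - Ds / kc, - Ns / kc - c * (Ns / kt), 0],
      [- Ds / kc - c * (Ds / kt), - \<gamma> - Ns / kt - Ns / kc, 0],
      [nd_b1 \<beta>R kRS n Ns Ds, c * nd_b2 \<beta>R kRS n Ns Ds, - \<gamma>R]])) v \<mu>"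
    unfolding eigenvalue_def matEq c_def by blast
  from ev3[OF this] show "Re \<mu> < 0"
  proof
    assume "\<mu> = - of_real \<gamma>R"
    then show ?thesis using assms by simp
  next
    assume h: "(\<mu> - of_real (- \<gamma> - Ds / kt - Ds / kc)) * (\<mu> - of_real (- \<gamma> - Ns / kt - Ns / kc))
       - of_real (- Ns / kc - c * (Ns / kt)) * of_real (- Ds / kc - c * (Ds / kt)) = 0"
    show ?thesis
    proof (rule quad[OF _ _ _ h])
      show "- \<gamma> - Ds / kt - Ds / kc < 0" "- \<gamma> - Ns / kt - Ns / kc < 0"
        using assms by (smt (verit) divide_pos_pos)+
      show "(- \<gamma> - Ds / kt - Ds / kc) * (- \<gamma> - Ns / kt - Ns / kc)
         - (- Ns / kc - c * (Ns / kt)) * (- Ds / kc - c * (Ds / kt)) > 0"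
        by (rule detpos) (use assms c1 in auto)
    qed
  qed
qed

end
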